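(* Let $n$ be even and let $f,g:\mathbb{F}_2^n\to\mathbb{F}_2$ be bent functions with $g(\mathbf{x})=f(\mathbf{x}\oplus\mathbf{u})$ for all $\mathbf{x}$, for some $\mathbf{u}\in\mathbb{F}_2^n$. Then for all $\mathbf{x}\in\mathbb{F}_2^n$, $$(g\oplus s_2)(\mathbf{x})=\left(f\oplus s_2\oplus\mathbb{L}_{\mathbf{u}}\oplus s_2(\mathbf{u})\right)(\mathbf{x}\oplus\mathbf{u}),$$ (where $g\oplus s_2$ and $f\oplus s_2\oplus\mathbb{L}_{\mathbf{u}}\oplus s_2(\mathbf{u})$ are negabent functions), and the duals satisfy $\tilde g(\mathbf{x})=\tilde f(\mathbf{x})\oplus\mathbf{u}\cdot\mathbf{x}$ for all $\mathbf{x}$.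
   Context: $\mathbf{x}\cdot\mathbf{y}=\bigoplus_ix_iy_i$. $s_2(\mathbf{x})=\bigoplus_{1\le i<j\le n}x_ix_j$ is the quadratic symmetric Boolean function. $\mathbb{L}_{\mathbf{u}}(\mathbf{x})=\bigoplus_{i=1}^n x_i\left(\bigoplus_{j\neq i}u_j\right)$. Walsh–Hadamard transform $W_f(\boldsymbol{\omega})=2^{-n/2}\sum_{\mathbf{x}}(-1)^{f(\mathbf{x})\oplus\mathbf{x}\cdot\boldsymbol{\omega}}$; $f$ is bent if $W_f(\boldsymbol{\omega})=\pm1$ for all $\boldsymbol{\omega}$, and its dual $\tilde f$ satisfies $(-1)^{\tilde f(\mathbf{x})}=W_f(\mathbf{x})$. Nega-Hadamard transform $N_f(\boldsymbol{\omega})=2^{-n/2}\sum_{\mathbf{x}}(-1)^{f(\mathbf{x})\oplus\mathbf{x}\cdot\boldsymbol{\omega}}i^{wt(\mathbf{x})}$ ($wt$ = Hamming weight); $f$ is negabent if $|N_f(\boldsymbol{\omega})|=1$ for all $\boldsymbol{\omega}$. *)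

theory Defs
  imports Complex_Main
begin

text \<open>Vectors of F_2^n are represented as functions nat => bool supported on {0..<n};
  F_2 is bool, with addition (xor) being (\<noteq>) and multiplication being conjunction.
  Boolean functions are maps (nat => bool) => bool, only their values on
  the carrier vecs n matter.\<close>

definition vecs :: "nat \<Rightarrow> (nat \<Rightarrow> bool) set" where
  "vecs n = {x. \<forall>i. n \<le> i \<longrightarrow> \<not> x i}"

definition vxor :: "(nat \<Rightarrow> bool) \<Rightarrow> (nat \<Rightarrow> bool) \<Rightarrow> (nat \<Rightarrow> bool)" where
  "vxor x y = (\<lambda>i. x i \<noteq> y i)"

definition dotp :: "nat \<Rightarrow> (nat \<Rightarrow> bool) \<Rightarrow> (nat \<Rightarrow> bool) \<Rightarrow> bool" where
  "dotp n x y = odd (card {i. i < n \<and> x i \<and> y i})"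

definition s2 :: "nat \<Rightarrow> (nat \<Rightarrow> bool) \<Rightarrow> bool" where
  "s2 n x = odd (card {(i, j). i < j \<and> j < n \<and> x i \<and> x j})"

definition Lu :: "nat \<Rightarrow> (nat \<Rightarrow> bool) \<Rightarrow> (nat \<Rightarrow> bool) \<Rightarrow> bool" where
  "Lu n u x = odd (card {i. i < n \<and> x i \<and> odd (card {j. j < n \<and> j \<noteq> i \<and> u j})})"

definition sgn2 :: "bool \<Rightarrow> real" where
  "sgn2 b = (if b then -1 else 1)"

definition hw :: "nat \<Rightarrow> (nat \<Rightarrow> bool) \<Rightarrow> nat" where
  "hw n x = card {i. i < n \<and> x i}"

definition walsh :: "nat \<Rightarrow> ((nat \<Rightarrow> bool) \<Rightarrow> bool) \<Rightarrow> (nat \<Rightarrow> bool) \<Rightarrow> real" where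
  "walsh n f w = 2 powr (- real n / 2) * (\<Sum>x\<in>vecs n. sgn2 (f x \<noteq> dotp n x w))"

definition bent :: "nat \<Rightarrow> ((nat \<Rightarrow> bool) \<Rightarrow> bool) \<Rightarrow> bool" where
  "bent n f = (\<forall>w\<in>vecs n. walsh n f w = 1 \<or> walsh n f w = -1)"

text \<open>dual: (-1)^{dual f x} = W_f(x) (meaningful for bent f)\<close>
definition dual :: "nat \<Rightarrow> ((nat \<Rightarrow> bool) \<Rightarrow> bool) \<Rightarrow> (nat \<Rightarrow> bool) \<Rightarrow> bool" where
  "dual n f x = (walsh n f x = -1)"

definition nega :: "nat \<Rightarrow> ((nat \<Rightarrow> bool) \<Rightarrow> bool) \<Rightarrow> (nat \<Rightarrow> bool) \<Rightarrow> complex" where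
  "nega n f w = complex_of_real (2 powr (- real n / 2)) *
     (\<Sum>x\<in>vecs n. complex_of_real (sgn2 (f x \<noteq> dotp n x w)) * \<i> ^ hw n x)"

definition negabent :: "nat \<Rightarrow> ((nat \<Rightarrow> bool) \<Rightarrow> bool) \<Rightarrow> bool" where
  "negabent n f = (\<forall>w\<in>vecs n. cmod (nega n f w) = 1)"

end

theory Submission
  imports Defs
begin

lemma card_lt_Suc:
  "card {i. i < Suc n \<and> P i} = card {i. i < n \<and> P i} + (if P n then 1 else 0)"
proof -
  have e: "{i. i < Suc n \<and> P i} = {i. i < n \<and> P i} \<union> (if P n then {n} else {})"
    by (auto simp: less_Suc_eq)
  have f: "finite {i. i < n \<and> P i}" by simp
  show ?thesis unfolding e using f by (cases "P n") auto
qed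

lemma dotp_Suc: "dotp (Suc n) x y = (dotp n x y \<noteq> (x n \<and> y n))"
  unfolding dotp_def using card_lt_Suc[of n "\<lambda>i. x i \<and> y i"] by auto

lemma hw_Suc: "hw (Suc n) x = hw n x + (if x n then 1 else 0)"
  unfolding hw_def using card_lt_Suc[of n "\<lambda>i. x i"] by auto

lemma dotp_vxor: "dotp n x (vxor a b) = (dotp n x a \<noteq> dotp n x b)"
proof (induction n)
  case 0
  then show ?case by (simp add: dotp_def)
next
  case (Suc n)
  have va: "vxor a b n = (a n \<noteq> b n)" by (simp add: vxor_def)
  show ?case unfolding dotp_Suc Suc.IH va
    by (cases "x n"; cases "a n"; cases "b n"; cases "dotp n x a"; cases "dotp n x b"; simp)
qed

lemma vxor_vxor: "vxor (vxor x u) u = x"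
  by (auto simp: vxor_def fun_eq_iff)

lemma dotp_comm: "dotp n x y = dotp n y x"
proof -
  have "{i. i < n \<and> x i \<and> y i} = {i. i < n \<and> y i \<and> x i}" by blast
  then show ?thesis unfolding dotp_def by simp
qed

lemma s2_Suc: "s2 (Suc n) x = (s2 n x \<noteq> (x n \<and> odd (hw n x)))"
proof -
  let ?A = "{(i, j). i < j \<and> j < n \<and> x i \<and> x j}"
  let ?B = "if x n then (\<lambda>i. (i, n)) ` {i. i < n \<and> x i} else {}"
  have e: "{(i, j). i < j \<and> j < Suc n \<and> x i \<and> x j} = ?A \<union> ?B"
    by (auto simp: less_Suc_eq)
  have fA: "finite ?A"
    by (rule finite_subset[of _ "{..<n} \<times> {..<n}"]) auto
  have fB: "finite ?B" by auto
  have d: "?A \<inter> ?B = {}" by auto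
  have cB: "card ?B = (if x n then hw n x else 0)"
    by (auto simp: hw_def card_image inj_on_def)
  have "card {(i, j). i < j \<and> j < Suc n \<and> x i \<and> x j} = card ?A + card ?B"
    unfolding e by (rule card_Un_disjoint[OF fA fB d])
  then show ?thesis unfolding s2_def using cB by auto
qed

lemma ipow_hw:
  "\<i> ^ hw n x = complex_of_real (sgn2 (s2 n x)) * (if odd (hw n x) then \<i> else 1)"
proof (induction n)
  case 0
  then show ?case by (simp add: hw_def s2_def sgn2_def)
next
  case (Suc n)
  show ?case
  proof (cases "x n")
    case False
    then show ?thesis using Suc by (simp add: hw_Suc s2_Suc)
  next
    case True
    have "\<i> ^ hw (Suc n) x = \<i> ^ hw n x * \<i>" using True by (simp add: hw_Suc)
    also have "\<dots> = complex_of_real (sgn2 (s2 n x)) * (if odd (hw n x) then \<i> else 1) * \<i>"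
      using Suc by simp
    finally show ?thesis using True
      by (cases "odd (hw n x)"; cases "s2 n x") (auto simp: hw_Suc s2_Suc sgn2_def)
  qed
qed

lemma vecs_eq: "vecs n = (\<lambda>S i. i \<in> S) ` Pow {..<n}"
proof
  show "vecs n \<subseteq> (\<lambda>S i. i \<in> S) ` Pow {..<n}"
  proof
    fix x assume x: "x \<in> vecs n"
    have "x = (\<lambda>i. i \<in> {i. i < n \<and> x i})" using x
      by (auto simp: vecs_def fun_eq_iff) (meson not_le)
    moreover have "{i. i < n \<and> x i} \<in> Pow {..<n}" by auto
    ultimately show "x \<in> (\<lambda>S i. i \<in> S) ` Pow {..<n}" by blast
  qed
  show "(\<lambda>S i. i \<in> S) ` Pow {..<n} \<subseteq> vecs n" by (auto simp: vecs_def)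
qed

lemma finite_vecs: "finite (vecs n)"
  unfolding vecs_eq by simp

lemma vxor_vecs: "x \<in> vecs n \<Longrightarrow> u \<in> vecs n \<Longrightarrow> vxor x u \<in> vecs n"
  by (auto simp: vecs_def vxor_def)

lemma sum_vxor:
  assumes "u \<in> vecs n"
  shows "(\<Sum>x\<in>vecs n. F (vxor x u)) = (\<Sum>x\<in>vecs n. (F x :: 'a::comm_monoid_add))"
  by (rule sum.reindex_bij_witness[where i="\<lambda>x. vxor x u" and j="\<lambda>x. vxor x u"])
     (auto simp: vxor_vecs assms vxor_vxor)

lemma sgn2_xor: "sgn2 (a \<noteq> b) = sgn2 a * sgn2 b"
  by (auto simp: sgn2_def)

lemma walsh_affine:
  assumes "v \<in> vecs n" "w \<in> vecs n"
  shows "walsh n (\<lambda>x. (h x \<noteq> dotp n x v) \<noteq> c) w = sgn2 c * walsh n h (vxor w v)"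
proof -
  have "\<And>x. sgn2 (((h x \<noteq> dotp n x v) \<noteq> c) \<noteq> dotp n x w) = sgn2 c * sgn2 (h x \<noteq> dotp n x (vxor w v))"
    by (auto simp: dotp_vxor sgn2_def)
  then show ?thesis unfolding walsh_def
    by (simp add: sum_distrib_left mult_ac)
qed

lemma walsh_shift:
  assumes "u \<in> vecs n" "\<forall>x\<in>vecs n. g x = f (vxor x u)"
  shows "walsh n g w = sgn2 (dotp n u w) * walsh n f w"
proof -
  have "(\<Sum>x\<in>vecs n. sgn2 (g x \<noteq> dotp n x w)) = (\<Sum>x\<in>vecs n. sgn2 (f (vxor x u) \<noteq> dotp n x w))"
    using assms(2) by (intro sum.cong) auto
  also have "\<dots> = (\<Sum>x\<in>vecs n. sgn2 (f (vxor (vxor x u) u) \<noteq> dotp n (vxor x u) w))"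
    by (rule sum_vxor[OF assms(1), symmetric])
  also have "\<dots> = (\<Sum>x\<in>vecs n. sgn2 (dotp n u w) * sgn2 (f x \<noteq> dotp n x w))"
  proof (intro sum.cong refl)
    fix x
    have "dotp n (vxor x u) w = (dotp n x w \<noteq> dotp n u w)"
      using dotp_vxor[of n w x u] dotp_comm[of n w] by metis
    then show "sgn2 (f (vxor (vxor x u) u) \<noteq> dotp n (vxor x u) w) = sgn2 (dotp n u w) * sgn2 (f x \<noteq> dotp n x w)"
      by (auto simp: vxor_vxor sgn2_def)
  qed
  finally show ?thesis unfolding walsh_def by (simp add: sum_distrib_left mult_ac)
qed

lemma bent_negabent:
  assumes "bent n h"
  shows "negabent n (\<lambda>x. h x \<noteq> s2 n x)"
  unfolding negabent_def
proof
  fix w assume w: "w \<in> vecs n"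
  define one where "one = (\<lambda>i::nat. i < n)"
  have one: "one \<in> vecs n" by (auto simp: one_def vecs_def)
  have w1: "vxor w one \<in> vecs n" using vxor_vecs[OF w one] .
  have d1: "\<And>x. dotp n x one = odd (hw n x)"
  proof -
    fix x
    have "{i. i < n \<and> x i \<and> i < n} = {i. i < n \<and> x i}" by blast
    then show "dotp n x one = odd (hw n x)" unfolding dotp_def hw_def one_def by simp
  qed
  let ?a = "(1 + \<i>) / 2" and ?b = "(1 - \<i>) / 2"
  have pt: "complex_of_real (sgn2 ((h x \<noteq> s2 n x) \<noteq> dotp n x w)) * \<i> ^ hw n x
     = ?a * complex_of_real (sgn2 (h x \<noteq> dotp n x w))
       + ?b * complex_of_real (sgn2 (h x \<noteq> dotp n x (vxor w one)))" for x
      by (simp only: ipow_hw dotp_vxor d1)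
         (cases "odd (hw n x)"; cases "h x"; cases "s2 n x"; cases "dotp n x w"; simp add: sgn2_def field_simps)
  define c where "c = complex_of_real (2 powr (- real n / 2))"
  have "nega n (\<lambda>x. h x \<noteq> s2 n x) w = c * (\<Sum>x\<in>vecs n. ?a * complex_of_real (sgn2 (h x \<noteq> dotp n x w))
       + ?b * complex_of_real (sgn2 (h x \<noteq> dotp n x (vxor w one))))"
    unfolding nega_def c_def by (simp only: pt)
  also have "\<dots> = ?a * (c * (\<Sum>x\<in>vecs n. complex_of_real (sgn2 (h x \<noteq> dotp n x w))))
       + ?b * (c * (\<Sum>x\<in>vecs n. complex_of_real (sgn2 (h x \<noteq> dotp n x (vxor w one)))))"
    by (simp only: sum.distrib sum_distrib_left[symmetric]) (simp add: algebra_simps)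
  also have "\<dots> = ?a * complex_of_real (walsh n h w)
           + ?b * complex_of_real (walsh n h (vxor w one))"
    unfolding walsh_def c_def by simp
  finally have eq: "nega n (\<lambda>x. h x \<noteq> s2 n x) w = ?a * complex_of_real (walsh n h w)
           + ?b * complex_of_real (walsh n h (vxor w one))" .
  have A: "walsh n h w = 1 \<or> walsh n h w = -1"
    using assms w by (auto simp: bent_def)
  have B: "walsh n h (vxor w one) = 1 \<or> walsh n h (vxor w one) = -1"
    using assms w1 by (auto simp: bent_def)
  have "nega n (\<lambda>x. h x \<noteq> s2 n x) w \<in> {1, -1, \<i>, -\<i>}"
    using A B
  proof (elim disjE)
    assume "walsh n h w = 1" "walsh n h (vxor w one) = 1"
    then have "nega n (\<lambda>x. h x \<noteq> s2 n x) w = 1" unfolding eq by (simp add: field_simps)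
    then show ?thesis by simp
  next
    assume "walsh n h w = 1" "walsh n h (vxor w one) = -1"
    then have "nega n (\<lambda>x. h x \<noteq> s2 n x) w = \<i>" unfolding eq by (simp add: field_simps)
    then show ?thesis by simp
  next
    assume "walsh n h w = -1" "walsh n h (vxor w one) = 1"
    then have "nega n (\<lambda>x. h x \<noteq> s2 n x) w = -\<i>" unfolding eq by (simp add: field_simps)
    then show ?thesis by simp
  next
    assume "walsh n h w = -1" "walsh n h (vxor w one) = -1"
    then have "nega n (\<lambda>x. h x \<noteq> s2 n x) w = -1" unfolding eq by (simp add: field_simps)
    then show ?thesis by simp
  qed
  then show "cmod (nega n (\<lambda>x. h x \<noteq> s2 n x) w) = 1" by auto
qed


lemma hw_vxor: "odd (hw n (vxor y u)) = (odd (hw n y) \<noteq> odd (hw n u))"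
proof (induction n)
  case 0
  then show ?case by (simp add: hw_def)
next
  case (Suc n)
  have va: "vxor y u n = (y n \<noteq> u n)" by (simp add: vxor_def)
  show ?case using Suc.IH unfolding hw_Suc va
    by (cases "y n"; cases "u n"; cases "odd (hw n y)"; cases "odd (hw n u)"; cases "odd (hw n (vxor y u))"; simp)
qed

lemma s2_vxor:
  "s2 n (vxor y u) = (((s2 n y \<noteq> s2 n u) \<noteq> (odd (hw n u) \<and> odd (hw n y))) \<noteq> dotp n y u)"
proof (induction n)
  case 0
  then show ?case by (simp add: hw_def s2_def dotp_def)
next
  case (Suc n)
  have va: "vxor y u n = (y n \<noteq> u n)" by (simp add: vxor_def)
  show ?case
    unfolding s2_Suc hw_Suc dotp_Suc Suc.IH va
    by (cases "y n"; cases "u n"; cases "s2 n y"; cases "s2 n u"; cases "odd (hw n y)";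
        cases "odd (hw n u)"; cases "dotp n y u"; simp add: hw_vxor)
qed

lemma dotp_const_xor: "dotp n y (\<lambda>i. P \<noteq> u i) = ((P \<and> odd (hw n y)) \<noteq> dotp n y u)"
proof (induction n)
  case 0
  then show ?case by (simp add: hw_def dotp_def)
next
  case (Suc n)
  show ?case unfolding hw_Suc dotp_Suc Suc.IH
    by (cases "y n"; cases "u n"; cases P; cases "odd (hw n y)"; cases "dotp n y u"; simp)
qed

lemma card_minus_i:
  assumes "i < n"
  shows "odd (card {j. j < n \<and> j \<noteq> i \<and> u j}) = (odd (hw n u) \<noteq> u i)"
proof -
  have e: "{j. j < n \<and> j \<noteq> i \<and> u j} = {j. j < n \<and> u j} - {i}" by auto
  have f: "finite {j. j < n \<and> u j}" by simp
  have c: "card {j. j < n \<and> j \<noteq> i \<and> u j} = hw n u - (if u i then 1 else 0)"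
    unfolding e hw_def using assms by (simp add: card_Diff_singleton_if)
  have "u i \<Longrightarrow> hw n u \<ge> 1"
    unfolding hw_def using assms f
    by (metis (mono_tags, lifting) One_nat_def Suc_leI card_gt_0_iff empty_iff mem_Collect_eq)
  then show ?thesis unfolding c by (cases "u i") auto
qed

lemma Lu_alt: "Lu n u y = ((odd (hw n u) \<and> odd (hw n y)) \<noteq> dotp n y u)"
proof -
  have e: "(i < n \<and> y i \<and> odd (card {j. j < n \<and> j \<noteq> i \<and> u j})) =
      (i < n \<and> y i \<and> (odd (hw n u) \<noteq> u i))" for i
  proof (cases "i < n")
    case True
    show ?thesis using card_minus_i[OF True, of u] by simp
  qed simp
  have "Lu n u y = dotp n y (\<lambda>i. odd (hw n u) \<noteq> u i)"
    unfolding Lu_def dotp_def by (simp only: e)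
  then show ?thesis using dotp_const_xor[of n y "odd (hw n u)" u] by simp
qed

lemma s2_vxor_Lu: "s2 n (vxor y u) = ((s2 n y \<noteq> s2 n u) \<noteq> Lu n u y)"
  unfolding s2_vxor Lu_alt
  by (cases "s2 n y"; cases "s2 n u"; cases "odd (hw n u) \<and> odd (hw n y)"; cases "dotp n y u"; simp)

theorem lemma3:
  fixes n :: nat and f g :: "(nat \<Rightarrow> bool) \<Rightarrow> bool" and u :: "nat \<Rightarrow> bool"
  assumes "even n"
    and "bent n f" and "bent n g"
    and "u \<in> vecs n"
    and "\<forall>x\<in>vecs n. g x = f (vxor x u)"
  shows "(\<forall>x\<in>vecs n. (g x \<noteq> s2 n x) =
            ((((f (vxor x u) \<noteq> s2 n (vxor x u)) \<noteq> Lu n u (vxor x u)) \<noteq> s2 n u)))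
    \<and> negabent n (\<lambda>x. g x \<noteq> s2 n x)
    \<and> negabent n (\<lambda>x. ((f x \<noteq> s2 n x) \<noteq> Lu n u x) \<noteq> s2 n u)
    \<and> (\<forall>x\<in>vecs n. dual n g x = (dual n f x \<noteq> dotp n u x))"
proof -
  have p1: "\<forall>x\<in>vecs n. (g x \<noteq> s2 n x) =
            ((((f (vxor x u) \<noteq> s2 n (vxor x u)) \<noteq> Lu n u (vxor x u)) \<noteq> s2 n u))"
  proof
    fix x assume x: "x \<in> vecs n"
    have "s2 n x = s2 n (vxor (vxor x u) u)" by (simp add: vxor_vxor)
    then have "s2 n x = (((s2 n (vxor x u) \<noteq> s2 n u) \<noteq> Lu n u (vxor x u)))"
      by (simp only: s2_vxor_Lu)
    moreover have "g x = f (vxor x u)" using assms(5) x by blast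
    ultimately show "(g x \<noteq> s2 n x) =
            ((((f (vxor x u) \<noteq> s2 n (vxor x u)) \<noteq> Lu n u (vxor x u)) \<noteq> s2 n u))"
      by (cases "s2 n (vxor x u)"; cases "s2 n u"; cases "Lu n u (vxor x u)"; cases "f (vxor x u)"; simp)
  qed
  have p2: "negabent n (\<lambda>x. g x \<noteq> s2 n x)" by (rule bent_negabent[OF assms(3)])
  define v where "v = (\<lambda>i. i < n \<and> odd (card {j. j < n \<and> j \<noteq> i \<and> u j}))"
  have v: "v \<in> vecs n" by (auto simp: v_def vecs_def)
  have Lv: "Lu n u x = dotp n x v" for x
    unfolding Lu_def dotp_def v_def
    by (rule arg_cong[where f="\<lambda>S. odd (card S)"]) auto
  define h where "h = (\<lambda>x. (f x \<noteq> dotp n x v) \<noteq> s2 n u)"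
  have bh: "bent n h"
    unfolding bent_def
  proof
    fix w assume w: "w \<in> vecs n"
    have "walsh n h w = sgn2 (s2 n u) * walsh n f (vxor w v)"
      unfolding h_def by (rule walsh_affine[OF v w])
    moreover have "walsh n f (vxor w v) = 1 \<or> walsh n f (vxor w v) = -1"
      using assms(2) vxor_vecs[OF w v] by (auto simp: bent_def)
    ultimately show "walsh n h w = 1 \<or> walsh n h w = -1"
      by (auto simp: sgn2_def)
  qed
  have eqh: "(\<lambda>x. ((f x \<noteq> s2 n x) \<noteq> Lu n u x) \<noteq> s2 n u) = (\<lambda>x. h x \<noteq> s2 n x)"
    by (auto simp: h_def Lv fun_eq_iff)
  have p3: "negabent n (\<lambda>x. ((f x \<noteq> s2 n x) \<noteq> Lu n u x) \<noteq> s2 n u)"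
    unfolding eqh by (rule bent_negabent[OF bh])
  have p4: "\<forall>x\<in>vecs n. dual n g x = (dual n f x \<noteq> dotp n u x)"
  proof
    fix x assume x: "x \<in> vecs n"
    have "walsh n g x = sgn2 (dotp n u x) * walsh n f x"
      by (rule walsh_shift[OF assms(4) assms(5)])
    moreover have "walsh n f x = 1 \<or> walsh n f x = -1"
      using assms(2) x by (auto simp: bent_def)
    ultimately show "dual n g x = (dual n f x \<noteq> dotp n u x)"
      unfolding dual_def by (auto simp: sgn2_def)
  qed
  show ?thesis using p1 p2 p3 p4 by blast
qed

end
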